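(* Fix a positive integer $m$ and positive reals $r_1,\dots,r_m$, and let $r=\max_jr_j$. Then for every $\varepsilon>0$ there exist $\vec\mu\in\mathbb{R}^m_{>0}$ and $\vec\sigma\in\mathbb{R}^m_{\ge0}$ with $\sigma_j/\mu_j=r_j$ for all $j$, such that for every truthful mechanism $A$ there is a product distribution $F=F_1\times\cdots\times F_m$, with each $F_j$ having mean $\mu_j$ and standard deviation at most $\sigma_j$, satisfying \[\frac{\mathrm{OPT}(F)}{\mathrm{REV}(A;F)}\ge 1-\varepsilon+\ln(1+r^2).\] In particular $\mathrm{APX}(\vec\mu,\vec\sigma)\ge1-\varepsilon+\ln(1+r^2)$.
   Context: One buyer with additive valuation for $m$ items with values $\vec v=(v_1,\dots,v_m)\sim F$ on $\mathbb{R}^m_{\ge0}$. $\mathbb{F}_{\vec\mu,\vec\sigma}$ is the class of joint distributions whose $j$-th marginal has mean $\mu_j$ and standard deviation at most $\sigma_j$. A mechanism is a pair $(x,\pi)$ with $x:\mathbb{R}^m_{\ge0}\to[0,1]^m$, $\pi:\mathbb{R}^m_{\ge0}\to\mathbb{R}_{\ge0}$; it is truthful if $x(\vec v)\cdot\vec v-\pi(\vec v)\ge x(\vec w)\cdot\vec v-\pi(\vec w)$ and $x(\vec v)\cdot\vec v-\pi(\vec v)\ge0$ for all $\vec v,\vec w$. $\mathrm{REV}(A;F)=\mathbb{E}_{\vec v\sim F}[\pi(\vec v)]$, $\mathrm{OPT}(F)$ is the supremum of $\mathrm{REV}$ over truthful mechanisms, and $\mathrm{APX}(\vec\mu,\vec\sigma)=\inf_A\sup_{F\in\mathbb{F}_{\vec\mu,\vec\sigma}}\mathrm{OPT}(F)/\mathrm{REV}(A;F)$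 over truthful $A$ (zero denominators give $+\infty$). *)

theory Defs
  imports "HOL-Probability.Probability"
begin

type_synonym valuation = "nat \<Rightarrow> real"
type_synonym mechanism = "(valuation \<Rightarrow> valuation) \<times> (valuation \<Rightarrow> real)"

text \<open>Valuation vectors for items 0..m-1 (coordinates outside are irrelevant/undefined).\<close>
definition valdom :: "nat \<Rightarrow> valuation set" where
  "valdom m = PiE {..<m} (\<lambda>_. {0..})"

text \<open>A mechanism (x, pi): allocation in [0,1]^m, nonnegative payment,
  payment measurable (so that its expected value is meaningful).\<close>
definition is_mechanism :: "nat \<Rightarrow> mechanism \<Rightarrow> bool" where
  "is_mechanism m A \<longleftrightarrow>
     (\<forall>v\<in>valdom m. (\<forall>j<m. 0 \<le> fst A v j \<and> fst A v j \<le> 1) \<and> 0 \<le> snd A v)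
     \<and> snd A \<in> borel_measurable (Pi\<^sub>M {..<m} (\<lambda>_. borel))"

definition truthful :: "nat \<Rightarrow> mechanism \<Rightarrow> bool" where
  "truthful m A \<longleftrightarrow>
     (\<forall>v\<in>valdom m. \<forall>w\<in>valdom m.
        (\<Sum>j<m. fst A v j * v j) - snd A v \<ge> (\<Sum>j<m. fst A w j * v j) - snd A w
      \<and> (\<Sum>j<m. fst A v j * v j) - snd A v \<ge> 0)"

definition REV :: "mechanism \<Rightarrow> valuation measure \<Rightarrow> ennreal" where
  "REV A F = (\<integral>\<^sup>+ v. ennreal (snd A v) \<partial>F)"

definition OPT :: "nat \<Rightarrow> valuation measure \<Rightarrow> ennreal" where
  "OPT m F = (SUP A \<in> {A. is_mechanism m A \<and> truthful m A}. REV A F)"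

definition ratio :: "ennreal \<Rightarrow> ennreal \<Rightarrow> ennreal" where
  "ratio a b = (if b = 0 then \<infinity> else a / b)"

definition marginal_ok :: "real measure \<Rightarrow> real \<Rightarrow> real \<Rightarrow> bool" where
  "marginal_ok M \<mu> \<sigma> \<longleftrightarrow>
     prob_space M \<and> sets M = sets borel \<and> (AE x in M. 0 \<le> x)
     \<and> integrable M (\<lambda>x. x) \<and> integrable M (\<lambda>x. x\<^sup>2)
     \<and> (\<integral>x. x \<partial>M) = \<mu> \<and> (\<integral>x. (x - \<mu>)\<^sup>2 \<partial>M) \<le> \<sigma>\<^sup>2"

definition dist_class :: "nat \<Rightarrow> (nat \<Rightarrow> real) \<Rightarrow> (nat \<Rightarrow> real) \<Rightarrow> valuation measure set" where
  "dist_class m \<mu> \<sigma> = {F. prob_space F \<and> sets F = sets (Pi\<^sub>M {..<m} (\<lambda>_. borel))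
       \<and> (AE v in F. v \<in> valdom m)
       \<and> (\<forall>j<m. marginal_ok (distr F borel (\<lambda>v. v j)) (\<mu> j) (\<sigma> j))}"

definition APX :: "nat \<Rightarrow> (nat \<Rightarrow> real) \<Rightarrow> (nat \<Rightarrow> real) \<Rightarrow> ennreal" where
  "APX m \<mu> \<sigma> = (INF A \<in> {A. is_mechanism m A \<and> truthful m A}.
                   SUP F \<in> dist_class m \<mu> \<sigma>. ratio (OPT m F) (REV A F))"

end

theory Submission
  imports Defs
begin

definition tp :: "real \<Rightarrow> real measure" where
  "tp t = distr (measure_pmf (bernoulli_pmf (1/t))) borel (\<lambda>b. if b then t else 0)"

lemma tp_prob: "prob_space (tp t)"
  unfolding tp_def by (intro prob_space.prob_space_distr) (auto simp: prob_space_measure_pmf)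

lemma tp_sets: "sets (tp t) = sets borel" unfolding tp_def by simp

lemma tp_integral:
  assumes "t \<ge> 1" "f \<in> borel_measurable borel"
  shows "(\<integral>x. f x \<partial>tp t) = f t * (1/t) + f 0 * (1 - 1/t)"
  unfolding tp_def using assms
  by (subst integral_distr) auto

lemma tp_integrable:
  fixes f :: "real \<Rightarrow> real"
  assumes "t \<ge> 1" "f \<in> borel_measurable borel"
  shows "integrable (tp t) f"
proof -
  have "integrable (measure_pmf (bernoulli_pmf (1/t))) (\<lambda>b. f (if b then t else 0))"
    by (rule integrable_measure_pmf_finite) (rule finite_subset[OF subset_UNIV], simp)
  then show ?thesis unfolding tp_def
    using integrable_distr_eq[of "\<lambda>b. if b then t else 0" "measure_pmf (bernoulli_pmf (1/t))" borel f] assms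
    by simp
qed

lemma tp_emeasure:
  assumes "t \<ge> 1"
  shows "emeasure (tp t) {t} = ennreal (1/t)" "emeasure (tp t) {0} = ennreal (1 - 1/t)"
proof -
  have a: "(\<lambda>b. if b then t else 0) -` {t} = {True}"
    using assms by (auto split: if_splits)
  have b: "(\<lambda>b. if b then t else 0) -` {0} = {False}"
    using assms by (auto split: if_splits)
  show "emeasure (tp t) {t} = ennreal (1/t)" unfolding tp_def
    using assms by (subst emeasure_distr) (auto simp: a emeasure_pmf_single)
  show "emeasure (tp t) {0} = ennreal (1 - 1/t)" unfolding tp_def
    using assms by (subst emeasure_distr) (auto simp: b emeasure_pmf_single)
qed

lemma tp_AE: "t \<ge> 0 \<Longrightarrow> AE x in tp t. 0 \<le> x"
  unfolding tp_def by (subst AE_distr_iff) auto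

lemma tp_ok:
  assumes "t \<ge> 1" "t - 1 \<le> \<sigma>\<^sup>2"
  shows "marginal_ok (tp t) 1 \<sigma>"
proof -
  have "(t - 1)\<^sup>2 * (1/t) + (0 - 1)\<^sup>2 * (1 - 1/t) = t - 1"
    using assms by (simp add: field_simps power2_eq_square)
  then show ?thesis
  unfolding marginal_ok_def using assms
  by (auto simp: tp_prob tp_sets tp_integrable tp_integral tp_AE)
qed


lemma ret_ok:
  assumes "d \<ge> 0" "\<sigma> \<ge> 0"
  shows "marginal_ok (return borel d) d \<sigma>"
proof -
  interpret prob_space "return borel d" by (simp add: prob_space_return)
  have i1: "integrable (return borel d) (\<lambda>x. x)"
    by (rule integrable_const_bound[where B="\<bar>d\<bar>"]) (simp_all add: AE_return)
  have i2: "integrable (return borel d) (\<lambda>x. x\<^sup>2)"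
    by (rule integrable_const_bound[where B="d\<^sup>2"]) (simp_all add: AE_return)
  have e1: "(\<integral>x. x \<partial>return borel d) = d" by (simp add: integral_return)
  have e2: "(\<integral>x. (x - d)\<^sup>2 \<partial>return borel d) = 0" by (simp add: integral_return)
  have a: "AE x in return borel d. 0 \<le> x" using assms by (simp add: AE_return)
  show ?thesis
  unfolding marginal_ok_def using assms i1 i2 e1 e2 a prob_space_return[of d borel]
  by simp
qed

definition Fs :: "nat \<Rightarrow> real \<Rightarrow> real \<Rightarrow> nat \<Rightarrow> real measure" where
  "Fs js t d = (\<lambda>j. if j = js then tp t else return borel d)"

definition wv :: "nat \<Rightarrow> nat \<Rightarrow> real \<Rightarrow> real \<Rightarrow> valuation" where
  "wv m js d s = (\<lambda>j. if j < m then (if j = js then s else d) else undefined)"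

lemma Fs_prob: "prob_space (Fs js t d j)"
  unfolding Fs_def by (auto simp: tp_prob prob_space_return)

lemma Fs_sets: "sets (Fs js t d j) = sets borel"
  unfolding Fs_def by (auto simp: tp_sets)

lemma P_prob: "prob_space (PiM I (Fs js t d))"
  by (rule prob_space_PiM) (rule Fs_prob)

lemma P_marg:
  assumes "j < m"
  shows "distr (PiM {..<m} (Fs js t d)) borel (\<lambda>v. v j) = Fs js t d j"
proof -
  have "distr (PiM {..<m} (Fs js t d)) (Fs js t d j) (\<lambda>v. v j) = Fs js t d j"
    using assms by (intro distr_PiM_component Fs_prob) auto
  moreover have "distr (PiM {..<m} (Fs js t d)) (Fs js t d j) (\<lambda>v. v j) = distr (PiM {..<m} (Fs js t d)) borel (\<lambda>v. v j)"
    by (rule distr_cong) (simp_all add: Fs_sets)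
  ultimately show ?thesis by simp
qed

lemma P_single:
  assumes "js < m" "v \<in> PiE {..<m} (\<lambda>_. UNIV)"
  shows "emeasure (PiM {..<m} (Fs js t d)) {v} = (\<Prod>j<m. emeasure (Fs js t d j) {v j})"
proof -
  interpret product_sigma_finite "Fs js t d"
    unfolding product_sigma_finite_def
    using Fs_prob prob_space_imp_sigma_finite by blast
  have "{v} = PiE {..<m} (\<lambda>j. {v j})" using assms(2)
    using PiE_singleton[of v "{..<m}"] by (simp add: PiE_iff)
  then show ?thesis
    by (simp add: emeasure_PiM Fs_sets)
qed


lemma wv_PiE: "wv m js d s \<in> PiE {..<m} (\<lambda>_. UNIV)"
  unfolding wv_def by (auto simp: PiE_iff extensional_def)

lemma P_single_wv:
  assumes "js < m" "t \<ge> 1" "s = t \<or> s = 0"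
  shows "emeasure (PiM {..<m} (Fs js t d)) {wv m js d s} = emeasure (tp t) {s}"
proof -
  have "emeasure (PiM {..<m} (Fs js t d)) {wv m js d s} = (\<Prod>j<m. emeasure (Fs js t d j) {wv m js d s j})"
    using assms by (intro P_single wv_PiE)
  also have "\<dots> = emeasure (Fs js t d js) {wv m js d s js} * (\<Prod>j\<in>{..<m} - {js}. emeasure (Fs js t d j) {wv m js d s j})"
    using assms by (subst prod.remove[of _ js]) auto
  also have "(\<Prod>j\<in>{..<m} - {js}. emeasure (Fs js t d j) {wv m js d s j}) = 1"
    by (intro prod.neutral) (auto simp: Fs_def wv_def emeasure_return)
  finally show ?thesis using assms by (simp add: Fs_def wv_def)
qed

lemma wv_ne: "t \<ge> 1 \<Longrightarrow> js < m \<Longrightarrow> wv m js d t \<noteq> wv m js d 0"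
  unfolding wv_def by (auto simp: fun_eq_iff)

lemma wv_sets: "{wv m js d s} \<in> sets (PiM {..<m} (Fs js t d))"
proof -
  have "{wv m js d s} = PiE {..<m} (\<lambda>j. {wv m js d s j})"
    using PiE_singleton[of "wv m js d s" "{..<m}"] wv_PiE[of m js d s] by (simp add: PiE_iff)
  then show ?thesis by (auto intro!: sets_PiM_I_finite simp: Fs_sets)
qed

lemma P_AE:
  assumes "js < m" "t \<ge> 1"
  shows "AE v in PiM {..<m} (Fs js t d). v \<in> {wv m js d 0, wv m js d t}"
proof -
  let ?P = "PiM {..<m} (Fs js t d)"
  interpret prob_space ?P by (rule P_prob)
  have "emeasure ?P {wv m js d 0, wv m js d t} = emeasure ?P {wv m js d 0} + emeasure ?P {wv m js d t}"
    using wv_ne[OF assms(2,1)] by (subst plus_emeasure) (auto simp: wv_sets insert_commute)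
  also have "\<dots> = 1" using assms
    by (simp add: P_single_wv tp_emeasure ennreal_plus[symmetric] del: ennreal_plus)
  finally have "emeasure ?P {wv m js d 0, wv m js d t} = 1" .
  moreover have "{wv m js d 0, wv m js d t} \<in> sets ?P" using wv_sets by (auto intro: sets.insert_in_sets)
  ultimately show ?thesis
    by (subst AE_prob_1) (auto simp: emeasure_eq_measure)
qed

lemma P_nn:
  assumes "js < m" "t \<ge> 1"
  shows "(\<integral>\<^sup>+v. f v \<partial>PiM {..<m} (Fs js t d)) = f (wv m js d 0) * ennreal (1 - 1/t) + f (wv m js d t) * ennreal (1/t)"
proof -
  let ?P = "PiM {..<m} (Fs js t d)"
  let ?a = "wv m js d 0" and ?b = "wv m js d t"
  have "(\<integral>\<^sup>+v. f v \<partial>?P) = (\<integral>\<^sup>+v. f ?a * indicator {?a} v + f ?b * indicator {?b} v \<partial>?P)"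
    apply (intro nn_integral_cong_AE)
    apply (rule AE_mp[OF P_AE[OF assms, of d]])
    apply (rule AE_I2)
    using wv_ne[OF assms(2,1), of d] by (auto simp: indicator_def)
  also have "\<dots> = f ?a * emeasure ?P {?a} + f ?b * emeasure ?P {?b}"
    by (subst nn_integral_add) (auto simp: wv_sets nn_integral_cmult_indicator intro!: borel_measurable_times_ennreal borel_measurable_indicator)
  finally show ?thesis using assms by (simp add: P_single_wv tp_emeasure)
qed


definition A0 :: "nat \<Rightarrow> real \<Rightarrow> mechanism" where
  "A0 js t = ((\<lambda>v j. if j = js \<and> t \<le> v js then 1 else 0), (\<lambda>v. if t \<le> v js then t else 0))"

lemma A0_sum:
  assumes "js < m"
  shows "(\<Sum>j<m. fst (A0 js t) w j * v j) = (if t \<le> w js then v js else 0)"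
proof -
  have "(\<Sum>j<m. fst (A0 js t) w j * v j) = (\<Sum>j<m. if j = js then (if t \<le> w js then v js else 0) else 0)"
    by (intro sum.cong) (auto simp: A0_def)
  also have "\<dots> = (if t \<le> w js then v js else 0)" using assms by (simp add: sum.delta)
  finally show ?thesis .
qed

lemma A0_mech:
  assumes "js < m" "t \<ge> 0"
  shows "is_mechanism m (A0 js t)" "truthful m (A0 js t)"
proof -
  have "(\<lambda>v. if t \<le> v js then t else 0) \<in> borel_measurable (Pi\<^sub>M {..<m} (\<lambda>_. borel))"
    using assms by (measurable, simp)
  then show "is_mechanism m (A0 js t)" unfolding is_mechanism_def using assms
    by (auto simp: A0_def)
  show "truthful m (A0 js t)" unfolding truthful_def
  proof (intro ballI conjI)
    fix v w assume v: "v \<in> valdom m" and "w \<in> valdom m"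
    have v0: "v js \<ge> 0" using v assms(1) by (auto simp: valdom_def PiE_iff)
    have s: "snd (A0 js t) u = (if t \<le> u js then t else 0)" for u by (simp add: A0_def)
    show "(\<Sum>j<m. fst (A0 js t) v j * v j) - snd (A0 js t) v \<ge> (\<Sum>j<m. fst (A0 js t) w j * v j) - snd (A0 js t) w"
      unfolding A0_sum[OF assms(1)] s by simp
    show "(\<Sum>j<m. fst (A0 js t) v j * v j) - snd (A0 js t) v \<ge> 0"
      unfolding A0_sum[OF assms(1)] s using v0 assms by simp
  qed
qed

lemma A0_REV:
  assumes "js < m" "t \<ge> 1"
  shows "REV (A0 js t) (PiM {..<m} (Fs js t d)) = 1"
  unfolding REV_def using assms
  by (simp add: P_nn A0_def wv_def ennreal_mult[symmetric] del: ennreal_mult)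


lemma core:
  fixes U X p :: "nat \<Rightarrow> real" and b \<kappa> D :: real and N :: nat
  assumes b: "b > 1" and U0: "U 0 \<ge> 0"
    and IC: "\<And>k. k < N \<Longrightarrow> U (Suc k) \<ge> U k + X k * (b^Suc k - b^k)"
    and pay: "\<And>k. k \<le> N \<Longrightarrow> p k \<le> b^k * X k - U k + D * b^k"
    and XN: "X N \<le> 1"
    and ka: "\<kappa> = 1 / (1 + N * (1 - 1/b))"
  shows "\<exists>k\<le>N. p k \<le> (\<kappa> + D) * b^k"
proof (rule ccontr)
  assume "\<not> ?thesis"
  then have big: "p k > (\<kappa> + D) * b^k" if "k \<le> N" for k using that by force
  have bk: "b^k > 0" for k using b by simp
  have Xk: "X k > \<kappa> + U k / b^k" if "k \<le> N" for k
  proof -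
    have "(\<kappa> + D) * b^k < b^k * X k - U k + D * b^k" using big[OF that] pay[OF that] by linarith
    then have "\<kappa> * b^k + U k < X k * b^k" by (simp add: algebra_simps)
    then have "(\<kappa> * b^k + U k) / b^k < X k" using bk[of k] by (simp add: pos_divide_less_eq)
    moreover have "(\<kappa> * b^k + U k) / b^k = \<kappa> + U k / b^k" using bk[of k] b by (simp add: add_divide_distrib)
    ultimately show ?thesis by simp
  qed
  have ind: "k \<le> N \<Longrightarrow> U k \<ge> \<kappa> * k * (1 - 1/b) * b^k" for k
  proof (induction k)
    case 0 then show ?case using U0 by simp
  next
    case (Suc k)
    then have kN: "k < N" by simp
    have IH: "U k \<ge> \<kappa> * k * (1 - 1/b) * b^k" using Suc by simp
    have d: "b^Suc k - b^k = (b - 1) * b^k" by (simp add: algebra_simps)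
    have dpos: "b^Suc k - b^k > 0" using d b bk[of k] by simp
    have "U (Suc k) \<ge> U k + X k * (b^Suc k - b^k)" using IC[OF kN] .
    moreover have "X k * (b^Suc k - b^k) \<ge> (\<kappa> + U k / b^k) * (b^Suc k - b^k)"
      using Xk[of k] kN dpos by (intro mult_right_mono) auto
    moreover have "(\<kappa> + U k / b^k) * (b^Suc k - b^k) = \<kappa> * (b - 1) * b^k + U k * (b - 1)"
      unfolding d using bk[of k] b by (simp add: field_simps)
    ultimately have "U (Suc k) \<ge> U k * b + \<kappa> * (b - 1) * b^k" by (simp add: algebra_simps)
    moreover have "U k * b \<ge> \<kappa> * k * (1 - 1/b) * b^k * b" using IH b by (intro mult_right_mono) auto
    moreover have "\<kappa> * real (Suc k) * (1 - 1/b) * b^Suc k = \<kappa> * k * (1 - 1/b) * b^k * b + \<kappa> * (b - 1) * b^k"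
      using b by (simp add: field_simps)
    ultimately show ?case by linarith
  qed
  have "X N > \<kappa> + U N / b^N" using Xk by simp
  moreover have "U N / b^N \<ge> \<kappa> * N * (1 - 1/b)" using ind[of N] bk[of N] by (simp add: pos_le_divide_eq)
  moreover have "\<kappa> + \<kappa> * N * (1 - 1/b) = 1"
  proof -
    have "1/b < 1" using b by simp
    then have "N * (1 - 1/b) \<ge> 0" by simp
    then have "1 + N * (1 - 1/b) > 0" by linarith
    then show ?thesis unfolding ka by (simp add: field_simps)
  qed
  ultimately show False using XN by linarith
qed


lemma wv_sum:
  assumes "js < m"
  shows "(\<Sum>j<m. c j * wv m js d s j) = c js * s + (\<Sum>j\<in>{..<m} - {js}. c j * d)"
proof -
  have "(\<Sum>j<m. c j * wv m js d s j) = c js * wv m js d s js + (\<Sum>j\<in>{..<m} - {js}. c j * wv m js d s j)"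
    using assms by (subst sum.remove[of _ js]) auto
  also have "(\<Sum>j\<in>{..<m} - {js}. c j * wv m js d s j) = (\<Sum>j\<in>{..<m} - {js}. c j * d)"
    by (intro sum.cong) (auto simp: wv_def)
  finally show ?thesis using assms by (simp add: wv_def)
qed

lemma wv_valdom: "s \<ge> 0 \<Longrightarrow> d \<ge> 0 \<Longrightarrow> wv m js d s \<in> valdom m"
  unfolding wv_def valdom_def by (auto simp: PiE_iff extensional_def)

lemma rest_bound:
  fixes d :: real
  assumes "is_mechanism m A" "v \<in> valdom m" "d \<ge> 0"
  shows "0 \<le> (\<Sum>j\<in>{..<m} - {js}. fst A v j * d)" "(\<Sum>j\<in>{..<m} - {js}. fst A v j * d) \<le> m * d"
proof -
  have x: "0 \<le> fst A v j" "fst A v j \<le> 1" if "j < m" for j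
    using assms that unfolding is_mechanism_def by auto
  show "0 \<le> (\<Sum>j\<in>{..<m} - {js}. fst A v j * d)" using x assms by (intro sum_nonneg) auto
  have "(\<Sum>j\<in>{..<m} - {js}. fst A v j * d) \<le> (\<Sum>j\<in>{..<m} - {js}. d)"
    using x assms by (intro sum_mono) (auto intro: mult_left_le_one_le)
  also have "\<dots> = card ({..<m} - {js}) * d" by simp
  also have "\<dots> \<le> m * d" using assms(3) by (intro mult_right_mono) (auto intro: order.trans[OF card_Diff1_le])
  finally show "(\<Sum>j\<in>{..<m} - {js}. fst A v j * d) \<le> m * d" .
qed

lemma mech_bound:
  assumes A: "is_mechanism m A" "truthful m A" and js: "js < m" and d: "d \<ge> 0" and b: "b > 1"
    and ka: "\<kappa> = 1 / (1 + N * (1 - 1/b))"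
  shows "\<exists>k\<le>N. snd A (wv m js d (b^k)) \<le> (\<kappa> + m * d) * b^k" "snd A (wv m js d 0) \<le> m * d"
proof -
  define w where "w k = wv m js d (b^k)" for k
  define R where "R v = (\<Sum>j\<in>{..<m} - {js}. fst A v j * d)" for v
  define U where "U k = (\<Sum>j<m. fst A (w k) j * w k j) - snd A (w k)" for k
  define X where "X k = fst A (w k) js" for k
  define p where "p k = snd A (w k)" for k
  let ?z = "wv m js d 0"
  have wval: "w k \<in> valdom m" for k unfolding w_def using b d by (intro wv_valdom) auto
  have zval: "?z \<in> valdom m" using d by (intro wv_valdom) auto
  have IC: "(\<Sum>j<m. fst A v j * v j) - snd A v \<ge> (\<Sum>j<m. fst A v' j * v j) - snd A v'"
    and IR: "(\<Sum>j<m. fst A v j * v j) - snd A v \<ge> 0"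
    if "v \<in> valdom m" "v' \<in> valdom m" for v v' using A(2) that unfolding truthful_def by auto
  have Uk: "U k = X k * b^k + R (w k) - p k" for k
    unfolding U_def X_def p_def R_def w_def
    using wv_sum[OF js, of "fst A (wv m js d (b^k))" d "b^k"] by (simp add: ac_simps)
  have Rb: "0 \<le> R v" "R v \<le> m * d" if "v \<in> valdom m" for v
    unfolding R_def using rest_bound[OF A(1) that d] by auto
  have z: "(\<Sum>j<m. fst A ?z j * ?z j) - snd A ?z = R ?z - snd A ?z"
    unfolding R_def using wv_sum[OF js, of "fst A ?z" d 0] by simp
  have "snd A ?z \<le> m * d" using IR[OF zval zval] z Rb[OF zval] by linarith
  then show "snd A (wv m js d 0) \<le> m * d" .
  have ex: "\<exists>k\<le>N. p k \<le> (\<kappa> + m * d) * b^k"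
  proof (rule core[OF b _ _ _ _ ka])
    have "U 0 \<ge> (\<Sum>j<m. fst A ?z j * w 0 j) - snd A ?z"
      unfolding U_def using IC[OF wval zval] .
    also have "(\<Sum>j<m. fst A ?z j * w 0 j) - snd A ?z = fst A ?z js + ((\<Sum>j<m. fst A ?z j * ?z j) - snd A ?z)"
      unfolding w_def z using wv_sum[OF js, of "fst A ?z" d "b^0"] by (simp add: R_def)
    finally show "U 0 \<ge> 0" using IR[OF zval zval] A(1) zval js unfolding is_mechanism_def by fastforce
  next
    fix k assume "k < N"
    have "U (Suc k) \<ge> (\<Sum>j<m. fst A (w k) j * w (Suc k) j) - snd A (w k)"
      unfolding U_def using IC[OF wval wval] .
    also have "(\<Sum>j<m. fst A (w k) j * w (Suc k) j) - snd A (w k) = X k * b^Suc k + R (w k) - p k"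
      unfolding w_def X_def p_def R_def using wv_sum[OF js, of "fst A (wv m js d (b^k))" d "b^Suc k"] by simp
    finally show "U (Suc k) \<ge> U k + X k * (b^Suc k - b^k)" unfolding Uk by (simp add: algebra_simps)
  next
    fix k assume "k \<le> N"
    have "b^k \<ge> 1" using b by simp
    moreover have "m * d \<ge> 0" using d by simp
    ultimately have "m * d \<le> m * d * b^k" by (metis mult_le_cancel_left1 not_le)
    then show "p k \<le> b^k * X k - U k + m * d * b^k" unfolding Uk using Rb[OF wval, of k]
      by (simp add: algebra_simps)
  next
    show "X N \<le> 1" unfolding X_def using A(1) wval js unfolding is_mechanism_def by auto
  qed
  then show "\<exists>k\<le>N. snd A (wv m js d (b^k)) \<le> (\<kappa> + m * d) * b^k" unfolding p_def w_def .
qed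


lemma ratio_bound:
  assumes "Op \<ge> 1" "R \<le> ennreal c" "c \<ge> 0" "T > 0 \<Longrightarrow> T * c \<le> 1"
  shows "ratio Op R \<ge> ennreal T"
proof (cases "T > 0")
  case False then show ?thesis by (simp add: ennreal_neg)
next
  case True
  show ?thesis
  proof (cases "R = 0")
    case True then show ?thesis by (simp add: ratio_def)
  next
    case False
    have Rt: "R < top" using assms(2) by (simp add: order.strict_trans1)
    have "ennreal T * R \<le> ennreal T * ennreal c" using assms(2) by (rule mult_left_mono) simp
    also have "\<dots> = ennreal (T * c)" using True assms(3) by (simp add: ennreal_mult)
    also have "\<dots> \<le> 1" using assms(4)[OF True] by (simp add: ennreal_le_1)
    also have "\<dots> \<le> Op" by fact
    finally have "ennreal T * R \<le> Op" .
    then have "\<not> Op / R < ennreal T" using divide_less_ennreal[OF False Rt] by (simp add: not_less)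
    then show ?thesis using False by (simp add: ratio_def not_less)
  qed
qed

lemma choose_N:
  fixes L \<epsilon> :: real
  assumes "L > 0" "\<epsilon> > 0"
  shows "\<exists>N::nat. N \<ge> (1::nat) \<and> real N * (1 - 1 / exp (L / real N)) \<ge> L - \<epsilon>/2"
proof -
  define N where "N = nat \<lceil>2 * L\<^sup>2 / \<epsilon>\<rceil> + 1"
  have N1: "N \<ge> 1" unfolding N_def by simp
  have NL: "real N \<ge> 2 * L\<^sup>2 / \<epsilon>" unfolding N_def by linarith
  have Npos: "real N > 0" using N1 by simp
  define x where "x = L / N"
  have x0: "x > 0" unfolding x_def using assms Npos by simp
  have "exp x \<ge> 1 + x" by (rule exp_ge_add_one_self)
  then have "1 / exp x \<le> 1 / (1 + x)" using x0 by (intro divide_left_mono) auto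
  then have "1 - 1 / exp x \<ge> x / (1 + x)" using x0 by (simp add: field_simps)
  then have "N * (1 - 1 / exp x) \<ge> N * (x / (1 + x))" using Npos by (intro mult_left_mono) auto
  moreover have "N * (x / (1 + x)) = L * N / (N + L)" unfolding x_def using Npos assms by (simp add: field_simps)
  moreover have "L - L * N / (N + L) = L\<^sup>2 / (N + L)" using Npos assms by (simp add: field_simps power2_eq_square)
  moreover have "L\<^sup>2 / (N + L) \<le> L\<^sup>2 / N" using Npos assms by (intro divide_left_mono) auto
  moreover have "L\<^sup>2 / N \<le> \<epsilon> / 2" using NL Npos assms by (simp add: field_simps)
  ultimately have "N * (1 - 1 / exp x) \<ge> L - \<epsilon>/2" by linarith
  then show ?thesis using N1 unfolding x_def by (intro exI[of _ N]) auto
qed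


lemma arith_final:
  fixes T \<epsilon> S L M1 d \<kappa> :: real and m :: nat
  assumes T: "T > 0" and e: "\<epsilon> > 0" and S: "S \<ge> L - \<epsilon>/2" and Tdef: "T = 1 - \<epsilon> + L"
    and M1: "M1 = max T 1" and m: "m \<ge> 1" and d: "d = \<epsilon> / (4 * m * M1 * (M1 + \<epsilon>))"
    and ka: "\<kappa> = 1 / (1 + S)"
  shows "T * (\<kappa> + 2 * m * d) \<le> 1"
proof -
  have Q: "1 + S \<ge> T + \<epsilon>/2" using S Tdef by simp
  have Qp: "T + \<epsilon>/2 > 0" using T e by simp
  have M1T: "M1 \<ge> T" "M1 \<ge> 1" using M1 by auto
  have mpos: "real m > 0" using m by simp
  have "T * \<kappa> = T / (1 + S)" using ka by simp
  also have "\<dots> \<le> T / (T + \<epsilon>/2)" using Q Qp T by (intro divide_left_mono) auto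
  finally have a: "T * \<kappa> \<le> T / (T + \<epsilon>/2)" .
  have Z: "M1 * (M1 + \<epsilon>) > 0" using M1T e by simp
  have d': "d = \<epsilon> / (4 * m * (M1 * (M1 + \<epsilon>)))" using d by (simp add: mult.assoc)
  have "2 * m * d = \<epsilon> / (2 * (M1 * (M1 + \<epsilon>)))" unfolding d' using mpos Z
    by (simp add: divide_simps)
  then have "2 * m * d = \<epsilon> / (2 * M1 * (M1 + \<epsilon>))" by (simp add: mult.assoc)
  then have "T * (2 * m * d) = (T / M1) * (\<epsilon> / (2 * (M1 + \<epsilon>)))" using M1T e by (simp add: field_simps)
  also have "\<dots> \<le> 1 * (\<epsilon> / (2 * (M1 + \<epsilon>)))"
    using M1T e T by (intro mult_right_mono) auto
  also have "\<dots> \<le> \<epsilon> / (2 * (T + \<epsilon>/2))" unfolding mult_1 using M1T e T by (intro divide_left_mono) auto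
  finally have b: "T * (2 * m * d) \<le> \<epsilon> / (2 * (T + \<epsilon>/2))" .
  have e2: "\<epsilon> / (2 * (T + \<epsilon>/2)) = (\<epsilon>/2) / (T + \<epsilon>/2)" by simp
  have "T / (T + \<epsilon>/2) + \<epsilon> / (2 * (T + \<epsilon>/2)) = T / (T + \<epsilon>/2) + (\<epsilon>/2) / (T + \<epsilon>/2)"
    by (simp only: e2)
  also have "\<dots> = (T + \<epsilon>/2) / (T + \<epsilon>/2)" by (rule add_divide_distrib[symmetric])
  finally have "T / (T + \<epsilon>/2) + \<epsilon> / (2 * (T + \<epsilon>/2)) = 1" using Qp by simp
  then show ?thesis using a b by (simp add: distrib_left)
qed


theorem theorem5:
  fixes m :: nat and r :: "nat \<Rightarrow> real" and \<epsilon> :: real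
  assumes "m \<ge> 1"
    and "\<forall>j<m. r j > 0"
    and "\<epsilon> > 0"
  shows "\<exists>\<mu> \<sigma> :: nat \<Rightarrow> real.
           (\<forall>j<m. \<mu> j > 0 \<and> \<sigma> j \<ge> 0 \<and> \<sigma> j / \<mu> j = r j)
         \<and> (\<forall>A. is_mechanism m A \<and> truthful m A \<longrightarrow>
              (\<exists>Fs :: nat \<Rightarrow> real measure.
                 (\<forall>j<m. marginal_ok (Fs j) (\<mu> j) (\<sigma> j))
               \<and> ratio (OPT m (Pi\<^sub>M {..<m} Fs)) (REV A (Pi\<^sub>M {..<m} Fs))
                   \<ge> ennreal (1 - \<epsilon> + ln (1 + (Max (r ` {..<m}))\<^sup>2))))
         \<and> APX m \<mu> \<sigma> \<ge> ennreal (1 - \<epsilon> + ln (1 + (Max (r ` {..<m}))\<^sup>2))"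
proof -
  have m1: "m \<ge> 1" and rpos: "\<And>j. j < m \<Longrightarrow> r j > 0" and e: "\<epsilon> > 0" using assms by auto
  obtain js where js: "js < m" "r js = Max (r ` {..<m})"
  proof -
    have "0 \<in> {..<m}" using m1 by simp
    then have "{..<m} \<noteq> {}" by blast
    then have "Max (r ` {..<m}) \<in> r ` {..<m}" by (intro Max_in) auto
    then obtain j where "j \<in> {..<m}" "Max (r ` {..<m}) = r j" by (rule imageE)
    then show ?thesis using that[of j] by simp
  qed
  define H where "H = 1 + (r js)\<^sup>2"
  define L where "L = ln H"
  have H1: "H > 1" unfolding H_def using rpos[OF js(1)] by simp
  have L0: "L > 0" unfolding L_def using H1 by simp
  define N where "N = (SOME N::nat. N \<ge> (1::nat) \<and> real N * (1 - 1 / exp (L / real N)) \<ge> L - \<epsilon>/2)"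
  have NN: "N \<ge> (1::nat) \<and> real N * (1 - 1 / exp (L / real N)) \<ge> L - \<epsilon>/2"
    using choose_N[OF L0 e] unfolding N_def by (rule someI_ex)
  have N1: "N \<ge> (1::nat)" and NS: "N * (1 - 1 / exp (L / N)) \<ge> L - \<epsilon>/2" using NN by auto
  define b where "b = exp (L / N)"
  have b1: "b > 1" unfolding b_def using L0 N1 by simp
  have bN: "b ^ N = H"
  proof -
    have "b ^ N = exp (real N * (L / N))" unfolding b_def by (rule exp_of_nat_mult[symmetric])
    also have "\<dots> = exp L" using N1 by simp
    also have "\<dots> = H" unfolding L_def using H1 by simp
    finally show ?thesis .
  qed
  define S where "S = N * (1 - 1/b)"
  define \<kappa> where "\<kappa> = 1 / (1 + S)"
  define T where "T = 1 - \<epsilon> + L"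
  define M1 where "M1 = max T 1"
  define d where "d = \<epsilon> / (4 * m * M1 * (M1 + \<epsilon>))"
  have d0: "d > 0" unfolding d_def M1_def using e m1 by (auto intro!: divide_pos_pos mult_pos_pos)
  have S0: "S \<ge> 0" unfolding S_def using b1 by simp
  have ka0: "\<kappa> \<ge> 0" unfolding \<kappa>_def using S0 by simp
  have Tc: "T * (\<kappa> + 2 * m * d) \<le> 1" if "T > 0"
    using arith_final[OF that e _ T_def M1_def m1 d_def \<kappa>_def] NS unfolding S_def b_def by simp
  have TT: "ennreal (1 - \<epsilon> + ln (1 + (Max (r ` {..<m}))\<^sup>2)) = ennreal T"
    unfolding T_def L_def H_def js(2) ..
  define \<mu> where "\<mu> j = (if j = js then 1 else d)" for j
  define \<sigma> where "\<sigma> j = r j * \<mu> j" for j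
  have key: "\<exists>Fs :: nat \<Rightarrow> real measure.
                 (\<forall>j<m. marginal_ok (Fs j) (\<mu> j) (\<sigma> j))
               \<and> ratio (OPT m (Pi\<^sub>M {..<m} Fs)) (REV A (Pi\<^sub>M {..<m} Fs)) \<ge> ennreal T
               \<and> Pi\<^sub>M {..<m} Fs \<in> dist_class m \<mu> \<sigma>"
    if A: "is_mechanism m A" "truthful m A" for A
  proof -
    obtain k where k: "k \<le> N" "snd A (wv m js d (b^k)) \<le> (\<kappa> + m * d) * b^k"
      using mech_bound(1)[OF A js(1) less_imp_le[OF d0] b1, of \<kappa> N] \<kappa>_def S_def by auto
    have z: "snd A (wv m js d 0) \<le> m * d"
      using mech_bound(2)[OF A js(1) less_imp_le[OF d0] b1, of \<kappa> N] \<kappa>_def S_def by auto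
    define t where "t = b ^ k"
    have t1: "t \<ge> 1" unfolding t_def using b1 by simp
    have tH: "t \<le> H" unfolding t_def bN[symmetric] using b1 k(1) by (intro power_increasing) auto
    let ?P = "Pi\<^sub>M {..<m} (Fs js t d)"
    have marg: "marginal_ok (Fs js t d j) (\<mu> j) (\<sigma> j)" if "j < m" for j
    proof (cases "j = js")
      case True
      then show ?thesis unfolding Fs_def \<mu>_def \<sigma>_def using t1 tH H_def
        by (auto intro!: tp_ok)
    next
      case False
      then show ?thesis unfolding Fs_def \<mu>_def \<sigma>_def using d0 rpos[OF that]
        by (auto intro!: ret_ok)
    qed
    have piz: "snd A (wv m js d 0) \<ge> 0" "snd A (wv m js d t) \<ge> 0"
      using A(1) wv_valdom[of 0 d m js] wv_valdom[of t d m js] d0 t1 unfolding is_mechanism_def by auto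
    have "REV A ?P = ennreal (snd A (wv m js d 0)) * ennreal (1 - 1/t) + ennreal (snd A (wv m js d t)) * ennreal (1/t)"
      unfolding REV_def using js(1) t1 by (rule P_nn)
    also have "\<dots> = ennreal (snd A (wv m js d 0) * (1 - 1/t) + snd A (wv m js d t) * (1/t))"
    proof -
      have q: "1 - 1/t \<ge> 0" "1/t \<ge> 0" using t1 by auto
      show ?thesis
        using piz q by (simp add: ennreal_mult[symmetric] ennreal_plus[symmetric] mult_nonneg_nonneg del: ennreal_plus)
    qed
    also have "\<dots> \<le> ennreal (\<kappa> + 2 * m * d)"
    proof (rule ennreal_leI)
      have "snd A (wv m js d 0) * (1 - 1/t) \<le> m * d * 1"
        using z piz t1 by (intro mult_mono) auto
      moreover have "snd A (wv m js d t) * (1/t) \<le> (\<kappa> + m * d) * t * (1/t)"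
        using k(2) t1 unfolding t_def by (intro mult_right_mono) auto
      moreover have "(\<kappa> + m * d) * t * (1/t) = \<kappa> + m * d" using t1 by simp
      ultimately show "snd A (wv m js d 0) * (1 - 1/t) + snd A (wv m js d t) * (1/t) \<le> \<kappa> + 2 * m * d"
        by simp
    qed
    finally have REVb: "REV A ?P \<le> ennreal (\<kappa> + 2 * m * d)" .
    have "OPT m ?P \<ge> REV (A0 js t) ?P" unfolding OPT_def
      using A0_mech[OF js(1), of t] t1 by (intro SUP_upper) auto
    then have OPT1: "OPT m ?P \<ge> 1" using A0_REV[OF js(1) t1] by simp
    have rat: "ratio (OPT m ?P) (REV A ?P) \<ge> ennreal T"
      by (rule ratio_bound[OF OPT1 REVb]) (use ka0 d0 Tc in auto)
    have dc: "?P \<in> dist_class m \<mu> \<sigma>"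
      unfolding dist_class_def
    proof (intro CollectI conjI allI impI)
      show "prob_space ?P" by (rule P_prob)
      show "sets ?P = sets (Pi\<^sub>M {..<m} (\<lambda>_. borel))" by (rule sets_PiM_cong) (auto simp: Fs_sets)
      show "AE v in ?P. v \<in> valdom m"
      proof (rule AE_mp[OF P_AE[OF js(1) t1, of d]], rule AE_I2, intro impI)
        fix v assume "v \<in> {wv m js d 0, wv m js d t}"
        then show "v \<in> valdom m" using d0 t1 wv_valdom[of 0 d m js] wv_valdom[of t d m js] by auto
      qed
      fix j assume "j < m"
      then show "marginal_ok (distr ?P borel (\<lambda>v. v j)) (\<mu> j) (\<sigma> j)"
        using P_marg[of j m js t d] marg by simp
    qed
    show ?thesis using marg rat dc by blast
  qed
  show ?thesis
  proof (intro exI conjI)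
    show "\<forall>j<m. \<mu> j > 0 \<and> \<sigma> j \<ge> 0 \<and> \<sigma> j / \<mu> j = r j"
      using d0 rpos unfolding \<mu>_def \<sigma>_def by (auto intro: less_imp_le)
    show "\<forall>A. is_mechanism m A \<and> truthful m A \<longrightarrow> (\<exists>Fs :: nat \<Rightarrow> real measure.
                 (\<forall>j<m. marginal_ok (Fs j) (\<mu> j) (\<sigma> j))
               \<and> ratio (OPT m (Pi\<^sub>M {..<m} Fs)) (REV A (Pi\<^sub>M {..<m} Fs))
                   \<ge> ennreal (1 - \<epsilon> + ln (1 + (Max (r ` {..<m}))\<^sup>2)))"
      unfolding TT using key by blast
  next
    show "APX m \<mu> \<sigma> \<ge> ennreal (1 - \<epsilon> + ln (1 + (Max (r ` {..<m}))\<^sup>2))"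
      unfolding TT APX_def
    proof (rule INF_greatest)
      fix A assume "A \<in> {A. is_mechanism m A \<and> truthful m A}"
      then obtain Fs where "ratio (OPT m (Pi\<^sub>M {..<m} Fs)) (REV A (Pi\<^sub>M {..<m} Fs)) \<ge> ennreal T"
        "Pi\<^sub>M {..<m} Fs \<in> dist_class m \<mu> \<sigma>" using key by blast
      then show "ennreal T \<le> (SUP F\<in>dist_class m \<mu> \<sigma>. ratio (OPT m F) (REV A F))"
        by (intro SUP_upper2) auto
    qed
  qed
qed

end
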